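(* Let $0\le a<b$, let $\alpha\in(0,1]$, and let $k:[a,b]\to\mathbb{R}$ be a continuous nonnegative map, differentiable on $[a,b]$, with $k(t)\neq 0$ and $k'(t)\neq 0$. Let $f:[a,b]\to\mathbb{R}$ be continuous on $[a,b]$ and $\alpha$-differentiable at every point of $(a,b)$. Then there exists $c\in(a,b)$ such that $$D^{\alpha}(f)(c)=\frac{f(b)-f(a)}{\frac{k^{\alpha}(b)}{\alpha}-\frac{k^{\alpha}(a)}{\alpha}}.$$
   Context: For $k$ as in the claim, $f:[a,b]\to\mathbb{R}$, $\alpha\in(0,1]$ and $t\in(a,b)$, the generalized fractional derivative of $f$ of order $\alpha$ at $t$ is $$D^{\alpha}(f)(t)=f^{(\alpha)}(t):=\lim_{\varepsilon\to 0}\frac{f\left(t-k(t)+k(t)\,e^{\varepsilon\frac{(k(t))^{-\alpha}}{k'(t)}}\right)-f(t)}{\varepsilon},$$ and $f$ is called $\alpha$-differentiable at $t$ if this limit exists. Here $k^{\alpha}(x)$ denotes $(k(x))^{\alpha}$. *)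

theory Defs
  imports "HOL-Analysis.Analysis"
begin

text \<open>Difference quotient of the generalized fractional derivative.
  The kernel k is given together with its derivative function k'
  (k' t is the derivative of k at t).\<close>
definition gfrac_quot ::
  "(real \<Rightarrow> real) \<Rightarrow> (real \<Rightarrow> real) \<Rightarrow> real \<Rightarrow> (real \<Rightarrow> real) \<Rightarrow> real \<Rightarrow> real \<Rightarrow> real" where
  "gfrac_quot k k' \<alpha> f t \<epsilon> =
     (f (t - k t + k t * exp (\<epsilon> * (k t powr (-\<alpha>)) / k' t)) - f t) / \<epsilon>"

definition alpha_differentiable ::
  "(real \<Rightarrow> real) \<Rightarrow> (real \<Rightarrow> real) \<Rightarrow> real \<Rightarrow> (real \<Rightarrow> real) \<Rightarrow> real \<Rightarrow> bool" where
  "alpha_differentiable k k' \<alpha> f t \<longleftrightarrow> (\<exists>L. (gfrac_quot k k' \<alpha> f t \<longlongrightarrow> L) (at 0))"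

definition gfrac_deriv ::
  "(real \<Rightarrow> real) \<Rightarrow> (real \<Rightarrow> real) \<Rightarrow> real \<Rightarrow> (real \<Rightarrow> real) \<Rightarrow> real \<Rightarrow> real" where
  "gfrac_deriv k k' \<alpha> f t = Lim (at 0) (gfrac_quot k k' \<alpha> f t)"

end

theory Submission
  imports Defs
begin

lemma key:
  fixes k0 c L t :: real and f :: "real \<Rightarrow> real"
  assumes k0: "k0 > 0" and c: "c \<noteq> 0"
    and lim: "((\<lambda>e. (f (t - k0 + k0 * exp (e * c)) - f t) / e) \<longlongrightarrow> L) (at 0)"
  shows "(f has_real_derivative L / (k0 * c)) (at t)"
proof -
  define Q where "Q = (\<lambda>e. (f (t - k0 + k0 * exp (e * c)) - f t) / e)"
  define \<phi> where "\<phi> = (\<lambda>h::real. ln (1 + h / k0) / c)"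
  have d\<phi>: "(\<phi> has_real_derivative (1 / k0) / c) (at 0)"
    unfolding \<phi>_def using k0 c
    by (auto intro!: derivative_eq_intros simp: field_simps)
  have \<phi>0: "\<phi> 0 = 0" by (simp add: \<phi>_def)
  have r1: "((\<lambda>h. \<phi> h / h) \<longlongrightarrow> (1/k0)/c) (at 0)"
    using d\<phi> unfolding DERIV_def by (simp add: \<phi>0)
  have ev: "eventually (\<lambda>h. h \<in> ball 0 k0 \<and> h \<noteq> 0) (at (0::real))"
  proof -
    have "eventually (\<lambda>h. h \<in> ball 0 k0) (nhds (0::real))"
      using k0 by (intro eventually_nhds_in_open) auto
    then show ?thesis unfolding eventually_at_filter by (auto elim: eventually_mono)
  qed
  have ne: "\<phi> h \<noteq> 0" if "h \<in> ball 0 k0" "h \<noteq> 0" for h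
  proof
    assume "\<phi> h = 0"
    then have "ln (1 + h / k0) = 0" using c by (simp add: \<phi>_def)
    moreover have "1 + h / k0 > 0" using that k0 by (auto simp: field_simps dist_real_def)
    ultimately have "1 + h / k0 = 1" by simp
    then show False using that k0 by simp
  qed
  have "(\<phi> \<longlongrightarrow> 0) (at 0)"
    using DERIV_isCont[OF d\<phi>] \<phi>0 by (metis isCont_def)
  then have fl: "filterlim \<phi> (at 0) (at 0)"
  proof -
    have "eventually (\<lambda>h. \<phi> h \<noteq> 0) (at (0::real))"
      using ev by (rule eventually_mono) (use ne in blast)
    then show ?thesis unfolding filterlim_at using \<open>(\<phi> \<longlongrightarrow> 0) (at 0)\<close> by auto
  qed
  have r2: "((\<lambda>h. Q (\<phi> h)) \<longlongrightarrow> L) (at 0)"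
    using filterlim_compose[OF lim[folded Q_def] fl] by (simp add: o_def)
  have "((\<lambda>h. Q (\<phi> h) * (\<phi> h / h)) \<longlongrightarrow> L * ((1/k0)/c)) (at 0)"
    by (intro tendsto_mult r1 r2)
  moreover have "eventually (\<lambda>h. Q (\<phi> h) * (\<phi> h / h) = (f (t + h) - f t) / h) (at 0)"
  proof (rule eventually_mono[OF ev])
    fix h :: real assume h: "h \<in> ball 0 k0 \<and> h \<noteq> 0"
    have pos: "1 + h / k0 > 0" using h k0 by (auto simp: field_simps dist_real_def)
    have eq: "t - k0 + k0 * exp (\<phi> h * c) = t + h"
    proof -
      have "\<phi> h * c = ln (1 + h / k0)" using c by (simp add: \<phi>_def)
      then have "exp (\<phi> h * c) = 1 + h / k0" using pos by simp
      then show ?thesis using k0 by (simp add: distrib_left)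
    qed
    have "Q (\<phi> h) = (f (t + h) - f t) / \<phi> h" unfolding Q_def eq ..
    then show "Q (\<phi> h) * (\<phi> h / h) = (f (t + h) - f t) / h"
      using ne[of h] h by simp
  qed
  ultimately have "((\<lambda>h. (f (t + h) - f t) / h) \<longlongrightarrow> L * ((1/k0)/c)) (at 0)"
    by (rule Lim_transform_eventually)
  then show ?thesis unfolding DERIV_def by (simp add: field_simps)
qed

theorem mainTheorem5:
  fixes a b \<alpha> :: real and k k' f :: "real \<Rightarrow> real"
  assumes "0 \<le> a" and "a < b"
    and "0 < \<alpha>" and "\<alpha> \<le> 1"
    and "continuous_on {a..b} k"
    and "\<And>t. t \<in> {a..b} \<Longrightarrow> k t \<ge> 0"
    and "\<And>t. t \<in> {a..b} \<Longrightarrow> (k has_real_derivative k' t) (at t within {a..b})"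
    and "\<And>t. t \<in> {a..b} \<Longrightarrow> k t \<noteq> 0"
    and "\<And>t. t \<in> {a..b} \<Longrightarrow> k' t \<noteq> 0"
    and "continuous_on {a..b} f"
    and "\<And>t. t \<in> {a<..<b} \<Longrightarrow> alpha_differentiable k k' \<alpha> f t"
  shows "\<exists>c\<in>{a<..<b}. gfrac_deriv k k' \<alpha> f c =
           (f b - f a) / (k b powr \<alpha> / \<alpha> - k a powr \<alpha> / \<alpha>)"
proof -
  note ab = assms(2) and al = assms(3)
  have kpos: "k t > 0" if "t \<in> {a..b}" for t
    using assms(6,8) that by (simp add: order_le_neq_trans)
  have kder: "(k has_real_derivative k' t) (at t)" if "a < t" "t < b" for t
    using assms(7)[of t] that at_within_Icc_at[of a t b] by simp
  have kab: "k a \<noteq> k b"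
  proof
    assume "k a = k b"
    have kd: "(k has_derivative (\<lambda>v. v * k' x)) (at x)" if "a < x" "x < b" for x
      using kder[OF that] by (simp add: has_field_derivative_def mult_commute_abs)
    from Rolle_deriv[OF ab \<open>k a = k b\<close> assms(5) kd]
    obtain z where z: "a < z" "z < b" "(\<lambda>v. v * k' z) = (\<lambda>v. 0)"
      by blast
    then have "k' z = 0" by (metis mult_1)
    then show False using assms(9)[of z] z by simp
  qed
  define H where "H = (\<lambda>x. k x powr \<alpha> / \<alpha>)"
  have Hcont: "continuous_on {a..b} H"
    unfolding H_def using kpos al
    by (intro continuous_intros assms(5)) (auto, fastforce)
  have Hder: "(H has_real_derivative k t powr (\<alpha> - 1) * k' t) (at t)" if "a < t" "t < b" for t
  proof -
    have "k t > 0" using kpos that by simp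
    then show ?thesis unfolding H_def using kder[OF that] al
      by (auto intro!: derivative_eq_intros simp: field_simps)
  qed
  have Hab: "H b \<noteq> H a"
  proof
    assume "H b = H a"
    then have "k b powr \<alpha> = k a powr \<alpha>" using al by (simp add: H_def)
    then have "(k b powr \<alpha>) powr (1/\<alpha>) = (k a powr \<alpha>) powr (1/\<alpha>)" by simp
    then have "k b = k a" using al kpos[of a] kpos[of b] ab by (simp add: powr_powr)
    then show False using kab by simp
  qed
  define cc where "cc = (\<lambda>t. k t powr (-\<alpha>) / k' t)"
  define D where "D = (\<lambda>t. gfrac_deriv k k' \<alpha> f t / (k t * cc t))"
  have fder: "(f has_real_derivative D t) (at t)" if "a < t" "t < b" for t
  proof -
    obtain L where L: "(gfrac_quot k k' \<alpha> f t \<longlongrightarrow> L) (at 0)"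
      using assms(11)[of t] \<open>a < t\<close> \<open>t < b\<close> unfolding alpha_differentiable_def by auto
    have gd: "gfrac_deriv k k' \<alpha> f t = L"
      unfolding gfrac_deriv_def using L by (intro tendsto_Lim) auto
    have kt: "k t > 0" using kpos that by simp
    have cc0: "cc t \<noteq> 0" using kt assms(9)[of t] that by (simp add: cc_def)
    have L': "((\<lambda>e. (f (t - k t + k t * exp (e * cc t)) - f t) / e) \<longlongrightarrow> L) (at 0)"
      using L unfolding gfrac_quot_def cc_def by (simp add: times_divide_eq_right)
    show ?thesis using key[OF kt cc0 L'] gd by (simp add: D_def)
  qed
  define g where "g = (\<lambda>x. (f b - f a) * H x - (H b - H a) * f x)"
  have gab: "g a = g b" by (simp add: g_def algebra_simps)
  have gcont: "continuous_on {a..b} g"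
    unfolding g_def by (intro continuous_intros Hcont assms(10))
  obtain z where z: "a < z" "z < b"
    "(\<lambda>v. v * ((f b - f a) * (k z powr (\<alpha> - 1) * k' z) - (H b - H a) * D z)) = (\<lambda>v. 0)"
  proof -
    have "\<exists>z. a < z \<and> z < b \<and>
      (\<lambda>v. v * ((f b - f a) * (k z powr (\<alpha> - 1) * k' z) - (H b - H a) * D z)) = (\<lambda>v. 0)"
    proof (rule Rolle_deriv[OF ab gab gcont])
      fix x assume x: "a < x" "x < b"
      have "(g has_real_derivative ((f b - f a) * (k x powr (\<alpha> - 1) * k' x) - (H b - H a) * D x)) (at x)"
        unfolding g_def using Hder[OF x] fder[OF x]
        by (auto intro!: derivative_eq_intros)
      then show "(g has_derivative (\<lambda>v. v * ((f b - f a) * (k x powr (\<alpha> - 1) * k' x) - (H b - H a) * D x))) (at x)"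
        by (simp add: has_field_derivative_def mult_commute_abs)
    qed
    then show ?thesis using that by blast
  qed
  have eq0: "(f b - f a) * (k z powr (\<alpha> - 1) * k' z) - (H b - H a) * D z = 0"
    using fun_cong[OF z(3), of 1] by simp
  have kz: "k z > 0" using kpos z by simp
  have k'z: "k' z \<noteq> 0" using assms(9)[of z] z by simp
  have pw: "k z powr (\<alpha> - 1) * k z * k z powr (-\<alpha>) = 1"
  proof -
    have "k z powr (\<alpha> - 1) * k z * k z powr (-\<alpha>) = k z powr (\<alpha> - 1) * k z powr 1 * k z powr (-\<alpha>)"
      using kz by (simp only: powr_one_gt_zero_iff powr_one)
    also have "\<dots> = k z powr ((\<alpha> - 1) + 1 + (-\<alpha>))" by (simp only: powr_add)
    finally show ?thesis using kz by simp
  qed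
  have Dz: "D z = (f b - f a) * (k z powr (\<alpha> - 1) * k' z) / (H b - H a)"
    using eq0 Hab by (simp add: field_simps)
  have "gfrac_deriv k k' \<alpha> f z = D z * (k z * cc z)"
    using kz k'z by (simp add: D_def cc_def)
  also have "\<dots> = (f b - f a) / (H b - H a) * (k z powr (\<alpha> - 1) * k z * k z powr (-\<alpha>)) * (k' z / k' z)"
    unfolding Dz cc_def using k'z Hab by (simp add: field_simps)
  also have "\<dots> = (f b - f a) / (H b - H a)" using pw k'z by simp
  finally show ?thesis using z unfolding H_def by auto
qed

end
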